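(* Let $x_1\in(0,1)$ and define $x_{n+1}=\frac{(1+x_n)^2}{4}$ for $n\ge1$. Then $\sum_{n\ge1}n(x_{n+1}-x_n)=+\infty$. *)

theory Defs
  imports "HOL-Analysis.Analysis"
begin

end

theory Submission
  imports Defs
begin

theorem lemma5p1:
  fixes x :: "nat \<Rightarrow> real"
  assumes "0 < x 1" and "x 1 < 1"
    and "\<And>n. n \<ge> 1 \<Longrightarrow> x (n + 1) = (1 + x n)^2 / 4"
  shows "filterlim (\<lambda>N. \<Sum>n=1..N. real n * (x (n + 1) - x n)) at_top sequentially"
proof -
  define c where "c = 1 - x 1"
  have c0: "0 < c" "c < 1" using assms(1,2) by (auto simp: c_def)
  have rec: "1 - x (n+1) = (1 - x n) - (1 - x n)^2/4" if "n \<ge> 1" for n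
    using assms(3)[OF that] by (simp add: power2_eq_square field_simps)
  have inv: "0 < 1 - x n \<and> 1 - x n < 1 \<and> c / real n \<le> 1 - x n" if "n \<ge> 1" for n
    using that
  proof (induction n rule: dec_induct)
    case base
    then show ?case using c0 by (simp add: c_def)
  next
    case (step n)
    define y where "y = 1 - x n"
    have y: "0 < y" "y < 1" "c / real n \<le> y" using step.IH by (auto simp: y_def)
    have e: "1 - x (Suc n) = y - y^2/4" using rec[OF step.hyps(1)] by (simp add: y_def)
    have n1: "real n \<ge> 1" using step.hyps(1) by simp
    have a: "0 < y - y^2/4" using y by (simp add: power2_eq_square)
    have b: "y - y^2/4 < 1" proof - have "0 < y^2" using y by simp then show ?thesis using y by linarith qed
    define z where "z = c / real n"
    have z: "0 < z" "z \<le> y" "z < 1" using y c0 n1 by (auto simp: z_def field_simps)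
    have m: "z - z^2/4 \<le> y - y^2/4"
    proof -
      have "y^2 - z^2 = (y - z) * (y + z)" by (simp add: power2_eq_square algebra_simps)
      also have "\<dots> \<le> (y - z) * 4" using z y by (intro mult_left_mono) auto
      finally show ?thesis by simp
    qed
    have "c / real (Suc n) \<le> z - z^2/4"
    proof -
      have "c / real (Suc n) = z * (real n / (real n + 1))" using n1 by (simp add: z_def field_simps)
      also have "real n / (real n + 1) = 1 - 1 / (real n + 1)" using n1 by (simp add: field_simps)
      also have "z * (1 - 1 / (real n + 1)) \<le> z * (1 - z/4)"
      proof (intro mult_left_mono)
        have "z/4 \<le> 1 / (real n + 1)"
        proof -
          have "c * real n \<le> real n" using c0 n1 by (simp add: mult_left_le_one_le)
          then have "c + c * real n \<le> real n * 4" using c0 n1 by linarith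
          then show ?thesis using n1 by (simp add: z_def field_simps)
        qed
        then show "1 - 1 / (real n + 1) \<le> 1 - z / 4" by simp
      qed (use z in auto)
      finally show ?thesis by (simp add: power2_eq_square algebra_simps)
    qed
    then show ?case using a b m e by simp
  qed
  have tm: "c^2/4 * inverse (real n) \<le> real n * (x (n + 1) - x n)" if "n \<ge> 1" for n
  proof -
    define y where "y = 1 - x n"
    have y: "c / real n \<le> y" "0 < y" using inv[OF that] by (auto simp: y_def)
    have n1: "real n \<ge> 1" using that by simp
    have d: "x (n+1) - x n = y^2/4" using rec[OF that] by (simp add: y_def)
    have "(c/real n)^2 \<le> y^2" using y c0 n1 by (intro power_mono) auto
    then have "c^2 / (real n)^2 \<le> y^2" by (simp add: power_divide)
    then have "c^2 \<le> y^2 * (real n)^2" using n1 by (simp add: field_simps)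
    then have "c^2 / (4 * real n) \<le> real n * (y^2/4)" using n1
      by (simp add: field_simps power2_eq_square)
    moreover have "c^2/4 * inverse (real n) = c^2/(4*real n)" by (simp add: field_simps)
    ultimately have "c^2/4 * inverse (real n) \<le> real n * (y^2/4)" by linarith
    then show ?thesis unfolding d .
  qed
  have h: "filterlim (\<lambda>N. c^2/4 * harm N :: real) at_top sequentially"
    by (rule filterlim_tendsto_pos_mult_at_top[OF tendsto_const _ harm_at_top]) (use c0 in simp)
  show ?thesis
  proof (rule filterlim_at_top_mono[OF h], rule always_eventually, rule allI)
    fix N
    have "c^2/4 * harm N = (\<Sum>n=1..N. c^2/4 * inverse (real n))"
      by (simp add: harm_def sum_distrib_left)
    also have "\<dots> \<le> (\<Sum>n=1..N. real n * (x (n + 1) - x n))"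
      by (intro sum_mono tm) auto
    finally show "c^2/4 * harm N \<le> (\<Sum>n=1..N. real n * (x (n + 1) - x n))" .
  qed
qed

end
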